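(* Let $A$ be a commutative $K$-algebra, $\mathcal{D}(A)$ its algebra of differential operators, $R$ a subalgebra of $\mathcal{D}(A)$ with $A\subseteq R$, and $R_i=R\cap\mathcal{D}(A)_i$ for $i\geq 0$. If $\mathfrak{a}$ is a nonzero ideal of $R$, then $\mathfrak{a}_0=\mathfrak{a}\cap A$ is a nonzero ideal of $A$ such that $[R_1,\mathfrak{a}_0]\subseteq\mathfrak{a}_0$ and $R\mathfrak{a}_0R\cap A=\mathfrak{a}_0$. Moreover, for an ideal $\mathfrak{a}_0$ of $A$ the condition $[R_1,\mathfrak{a}_0]\subseteq\mathfrak{a}_0$ is equivalent to $[D_R,\mathfrak{a}_0]\subseteq\mathfrak{a}_0$, where $D_R=R_1\cap\mathrm{Der}_K(A)$.
   Context: For a commutative $K$-algebra $A$, $\mathcal{D}(A)=\bigcup_{i\geq0}\mathcal{D}(A)_i\subseteq\mathrm{End}_K(A)$ where $\mathcal{D}(A)_{-1}=0$ and $\mathcal{D}(A)_i=\{u\in\mathrm{End}_K(A)\mid au-ua\in\mathcal{D}(A)_{i-1}\ \forall a\in A\}$; $A$ is identified with $\mathcal{D}(A)_0$ via multiplication operators. $[x,y]=xy-yx$. *)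

theory Defs
  imports Main
begin

definition K_algebra :: "('k::field \<Rightarrow> 'a::comm_ring_1 \<Rightarrow> 'a) \<Rightarrow> bool" where
  "K_algebra sm \<longleftrightarrow>
     (\<forall>c x y. sm c (x + y) = sm c x + sm c y) \<and>
     (\<forall>c d x. sm (c + d) x = sm c x + sm d x) \<and>
     (\<forall>c d x. sm (c * d) x = sm c (sm d x)) \<and>
     (\<forall>x. sm 1 x = x) \<and>
     (\<forall>c x y. sm c (x * y) = sm c x * y)"

definition End_K :: "('k::field \<Rightarrow> 'a::comm_ring_1 \<Rightarrow> 'a) \<Rightarrow> ('a \<Rightarrow> 'a) set" where
  "End_K sm = {u. (\<forall>x y. u (x + y) = u x + u y) \<and> (\<forall>c x. u (sm c x) = sm c (u x))}"

text \<open>Multiplication operator, identifying A with D(A)_0.\<close>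
definition mulop :: "'a::comm_ring_1 \<Rightarrow> 'a \<Rightarrow> 'a" where
  "mulop a = (\<lambda>x. a * x)"

definition comm :: "('a::comm_ring_1 \<Rightarrow> 'a) \<Rightarrow> ('a \<Rightarrow> 'a) \<Rightarrow> 'a \<Rightarrow> 'a" where
  "comm u v = (\<lambda>x. u (v x) - v (u x))"

text \<open>Shifted filtration: Dsh sm 0 = D(A)_{-1} = 0, Dsh sm (Suc i) = D(A)_i.\<close>
fun Dsh :: "('k::field \<Rightarrow> 'a::comm_ring_1 \<Rightarrow> 'a) \<Rightarrow> nat \<Rightarrow> ('a \<Rightarrow> 'a) set" where
  "Dsh sm 0 = {\<lambda>x. 0}"
| "Dsh sm (Suc i) = {u \<in> End_K sm. \<forall>a. comm (mulop a) u \<in> Dsh sm i}"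

definition Dord :: "('k::field \<Rightarrow> 'a::comm_ring_1 \<Rightarrow> 'a) \<Rightarrow> nat \<Rightarrow> ('a \<Rightarrow> 'a) set" where
  "Dord sm i = Dsh sm (Suc i)"

definition DiffOps :: "('k::field \<Rightarrow> 'a::comm_ring_1 \<Rightarrow> 'a) \<Rightarrow> ('a \<Rightarrow> 'a) set" where
  "DiffOps sm = (\<Union>i. Dord sm i)"

definition Der_K :: "('k::field \<Rightarrow> 'a::comm_ring_1 \<Rightarrow> 'a) \<Rightarrow> ('a \<Rightarrow> 'a) set" where
  "Der_K sm = {d \<in> End_K sm. \<forall>x y. d (x * y) = x * d y + y * d x}"

definition subalgebra_D :: "('k::field \<Rightarrow> 'a::comm_ring_1 \<Rightarrow> 'a) \<Rightarrow> ('a \<Rightarrow> 'a) set \<Rightarrow> bool" where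
  "subalgebra_D sm R \<longleftrightarrow> R \<subseteq> DiffOps sm \<and> id \<in> R \<and> (\<lambda>x. 0) \<in> R \<and>
     (\<forall>u\<in>R. \<forall>v\<in>R. (\<lambda>x. u x + v x) \<in> R \<and> (\<lambda>x. u x - v x) \<in> R \<and> u \<circ> v \<in> R) \<and>
     (\<forall>c. \<forall>u\<in>R. (\<lambda>x. sm c (u x)) \<in> R)"

definition ideal_R :: "('k::field \<Rightarrow> 'a::comm_ring_1 \<Rightarrow> 'a) \<Rightarrow> ('a \<Rightarrow> 'a) set \<Rightarrow> ('a \<Rightarrow> 'a) set \<Rightarrow> bool" where
  "ideal_R sm R I \<longleftrightarrow> I \<subseteq> R \<and> (\<lambda>x. 0) \<in> I \<and>
     (\<forall>u\<in>I. \<forall>v\<in>I. (\<lambda>x. u x + v x) \<in> I \<and> (\<lambda>x. u x - v x) \<in> I) \<and>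
     (\<forall>c. \<forall>u\<in>I. (\<lambda>x. sm c (u x)) \<in> I) \<and>
     (\<forall>r\<in>R. \<forall>u\<in>I. r \<circ> u \<in> I \<and> u \<circ> r \<in> I)"

definition ideal_A :: "('k::field \<Rightarrow> 'a::comm_ring_1 \<Rightarrow> 'a) \<Rightarrow> 'a set \<Rightarrow> bool" where
  "ideal_A sm I \<longleftrightarrow> 0 \<in> I \<and> (\<forall>x\<in>I. \<forall>y\<in>I. x + y \<in> I \<and> x - y \<in> I) \<and>
     (\<forall>c. \<forall>x\<in>I. sm c x \<in> I) \<and> (\<forall>a. \<forall>x\<in>I. a * x \<in> I)"

definition RSR :: "('a::comm_ring_1 \<Rightarrow> 'a) set \<Rightarrow> ('a \<Rightarrow> 'a) set \<Rightarrow> ('a \<Rightarrow> 'a) set" where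
  "RSR R S = {w. \<exists>(n::nat) r s t. (\<forall>i<n. r i \<in> R \<and> s i \<in> S \<and> t i \<in> R) \<and>
                  w = (\<lambda>x. \<Sum>i<n. r i (s i (t i x)))}"

end

theory Submission
  imports Defs
begin

lemma sm_zero: "K_algebra sm \<Longrightarrow> sm c 0 = 0"
proof -
  assume "K_algebra sm"
  then have "sm c (0 + 0) = sm c 0 + sm c 0" unfolding K_algebra_def by blast
  then show ?thesis by simp
qed

lemma sm_diff: "K_algebra sm \<Longrightarrow> sm c (a - b) = sm c a - sm c b"
proof -
  assume "K_algebra sm"
  then have "sm c ((a - b) + b) = sm c (a - b) + sm c b" unfolding K_algebra_def by blast
  then show ?thesis by (simp add: algebra_simps)
qed

lemma mulop_End: "K_algebra sm \<Longrightarrow> mulop c \<in> End_K sm"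
proof -
  assume A: "K_algebra sm"
  have "c * sm k x = sm k (c * x)" for k x
  proof -
    have "sm k (x * c) = sm k x * c" using A unfolding K_algebra_def by blast
    then show ?thesis by (simp add: mult.commute)
  qed
  then show ?thesis unfolding End_K_def mulop_def by (simp add: algebra_simps)
qed

lemma zero_End: "K_algebra sm \<Longrightarrow> (\<lambda>x. 0) \<in> End_K sm"
  unfolding End_K_def using sm_zero by auto

lemma zero_Dsh:
  fixes sm :: "'k::field \<Rightarrow> 'a::comm_ring_1 \<Rightarrow> 'a"
  shows "K_algebra sm \<Longrightarrow> (\<lambda>x. 0) \<in> Dsh sm k"
proof (induction k)
  case 0 then show ?case by simp
next
  case (Suc k)
  have "comm (mulop a) (\<lambda>x. 0) = (\<lambda>x. 0)" for a :: 'a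
    unfolding comm_def mulop_def by simp
  then have "\<forall>a. comm (mulop a) (\<lambda>x. 0) \<in> Dsh sm k" using Suc.IH[OF Suc.prems] by metis
  then show ?case using zero_End[OF Suc.prems] by simp
qed

lemma Dsh1_mulop: "u \<in> Dsh sm (Suc 0) \<Longrightarrow> u = mulop (u 1)"
proof -
  assume "u \<in> Dsh sm (Suc 0)"
  then have "\<forall>a. comm (mulop a) u = (\<lambda>x. 0)" by simp
  then have "a * u 1 - u (a * 1) = 0" for a
    unfolding comm_def mulop_def by metis
  then show ?thesis unfolding mulop_def by (auto simp: mult.commute)
qed

lemma mulop_Dsh1: "K_algebra sm \<Longrightarrow> mulop c \<in> Dsh sm (Suc 0)"
proof -
  assume A: "K_algebra sm"
  have "comm (mulop a) (mulop c) = (\<lambda>x. 0)" for a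
    unfolding comm_def mulop_def by (auto simp: algebra_simps)
  then show ?thesis using mulop_End[OF A] by simp
qed

lemma End_diff: "u \<in> End_K sm \<Longrightarrow> v \<in> End_K sm \<Longrightarrow> K_algebra sm \<Longrightarrow> (\<lambda>x. u x - v x) \<in> End_K sm"
  unfolding End_K_def using sm_diff[of sm] by auto

lemma Dsh2_comm: "u \<in> Dsh sm (Suc (Suc 0)) \<Longrightarrow> comm (mulop a) u = mulop (a * u 1 - u a)"
proof -
  assume "u \<in> Dsh sm (Suc (Suc 0))"
  then have "comm (mulop a) u \<in> Dsh sm (Suc 0)" by simp
  then have "comm (mulop a) u = mulop (comm (mulop a) u 1)" by (rule Dsh1_mulop)
  then show ?thesis unfolding comm_def mulop_def by simp
qed

lemma Dsh2_form: "u \<in> Dsh sm (Suc (Suc 0)) \<Longrightarrow> u (a * x) = a * u x - x * (a * u 1 - u a)"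
proof -
  assume "u \<in> Dsh sm (Suc (Suc 0))"
  then have "comm (mulop a) u x = mulop (a * u 1 - u a) x" using Dsh2_comm by metis
  then show ?thesis unfolding comm_def mulop_def by (simp add: algebra_simps)
qed

lemma ideal_sum:
  assumes "ideal_R sm R I"
  shows "\<forall>i<(n::nat). f i \<in> I \<Longrightarrow> (\<lambda>x. \<Sum>i<n. f i x) \<in> I"
proof (induction n)
  case 0 then show ?case using assms(1) unfolding ideal_R_def by simp
next
  case (Suc n)
  then have h1: "(\<lambda>x. \<Sum>i<n. f i x) \<in> I" and h2: "f n \<in> I" by auto
  have add: "\<And>u v. u \<in> I \<Longrightarrow> v \<in> I \<Longrightarrow> (\<lambda>x. u x + v x) \<in> I"
    using assms(1) unfolding ideal_R_def by blast
  have "(\<lambda>x. (\<Sum>i<n. f i x) + f n x) \<in> I" using add[OF h1 h2] by simp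
  then show ?case by simp
qed

lemma r1: fixes a z p q r :: "'a::comm_ring_1"
  shows "a*p - z*(a*q - r) - q * (a*z) = a*(p - q * z) + z*(r - q*a)"
  by (simp add: algebra_simps)
lemma r2: fixes a z p q :: "'a::comm_ring_1"
  shows "a * p - (a * p + z * q) = - q * z"
  by (simp add: algebra_simps)
lemma r3: fixes x z p q r :: "'a::comm_ring_1"
  shows "p - q * (x*z) - x * (r - q * z) = p - x * r"
  by (simp add: algebra_simps)
lemma h1: fixes u :: "'a::comm_ring_1 \<Rightarrow> 'a"
  assumes "u (a*z) = a*u z - z*(a*u 1 - u a)"
  shows "u (a*z) - u 1 * (a*z) = a*(u z - u 1 * z) + z*(u a - u 1*a)"
  unfolding assms by (rule r1)
lemma h2: fixes d :: "'a::comm_ring_1 \<Rightarrow> 'a"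
  assumes "d (a*z) = a * d z + z * d a"
  shows "a * d z - d (a * z) = - d a * z"
  unfolding assms by (rule r2)

lemma Dord1: "Dord sm 1 = Dsh sm (Suc (Suc 0))"
  unfolding Dord_def by simp

lemma Dsh_Suc_I: "u \<in> End_K sm \<Longrightarrow> (\<And>a. comm (mulop a) u \<in> Dsh sm i) \<Longrightarrow> u \<in> Dsh sm (Suc i)"
  by simp

theorem theorem1p8:
  fixes sm :: "'k::field \<Rightarrow> 'a::comm_ring_1 \<Rightarrow> 'a"
    and R :: "('a \<Rightarrow> 'a) set"
  assumes alg: "K_algebra sm"
    and sub: "subalgebra_D sm R"
    and AR: "range mulop \<subseteq> R"
  shows "(\<forall>\<aa>. ideal_R sm R \<aa> \<and> \<aa> \<noteq> {\<lambda>x. 0} \<longrightarrow>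
            (let \<aa>0 = {x. mulop x \<in> \<aa>} in
               ideal_A sm \<aa>0 \<and> \<aa>0 \<noteq> {0} \<and>
               (\<forall>u \<in> R \<inter> Dord sm 1. \<forall>x \<in> \<aa>0. comm u (mulop x) \<in> mulop ` \<aa>0) \<and>
               RSR R (mulop ` \<aa>0) \<inter> range mulop = mulop ` \<aa>0))
       \<and> (\<forall>\<aa>0. ideal_A sm \<aa>0 \<longrightarrow>
            ((\<forall>u \<in> R \<inter> Dord sm 1. \<forall>x \<in> \<aa>0. comm u (mulop x) \<in> mulop ` \<aa>0) \<longleftrightarrow>
             (\<forall>d \<in> (R \<inter> Dord sm 1) \<inter> Der_K sm. \<forall>x \<in> \<aa>0. comm d (mulop x) \<in> mulop ` \<aa>0)))"
proof (intro conjI allI impI)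
  fix I assume HI: "ideal_R sm R I \<and> I \<noteq> {\<lambda>x. 0}"
  then have id: "ideal_R sm R I" and nz: "I \<noteq> {\<lambda>x. 0}" by auto
  from id have IR: "I \<subseteq> R" and I0: "(\<lambda>x. 0) \<in> I"
    and Iadd: "\<And>u v. u \<in> I \<Longrightarrow> v \<in> I \<Longrightarrow> (\<lambda>x. u x + v x) \<in> I"
    and Isub: "\<And>u v. u \<in> I \<Longrightarrow> v \<in> I \<Longrightarrow> (\<lambda>x. u x - v x) \<in> I"
    and Ism: "\<And>c u. u \<in> I \<Longrightarrow> (\<lambda>x. sm c (u x)) \<in> I"
    and Imul: "\<And>r u. r \<in> R \<Longrightarrow> u \<in> I \<Longrightarrow> r \<circ> u \<in> I \<and> u \<circ> r \<in> I"
    unfolding ideal_R_def by blast+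
  have commI: "comm (mulop a) u \<in> I" if "u \<in> I" for a u
  proof -
    have ma: "mulop a \<in> R" using AR by auto
    have "mulop a \<circ> u \<in> I" "u \<circ> mulop a \<in> I" using Imul[OF ma that] by auto
    from Isub[OF this] show ?thesis unfolding comm_def by (simp add: o_def)
  qed
  define J where "J = {x. mulop x \<in> I}"
  have J1: "ideal_A sm J"
  proof -
    have "mulop (0::'a) = (\<lambda>x. 0)" unfolding mulop_def by auto
    then have "0 \<in> J" using I0 unfolding J_def by simp
    moreover have "x + y \<in> J \<and> x - y \<in> J" if hx: "x \<in> J" and hy: "y \<in> J" for x y
    proof -
      have mx: "mulop x \<in> I" and my: "mulop y \<in> I" using hx hy unfolding J_def by auto
      have e1: "(\<lambda>z. mulop x z + mulop y z) = mulop (x + y)"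
        unfolding mulop_def by (rule ext) (simp add: distrib_right)
      have e2: "(\<lambda>z. mulop x z - mulop y z) = mulop (x - y)"
        unfolding mulop_def by (rule ext) (simp add: left_diff_distrib)
      have "mulop (x + y) \<in> I" using Iadd[OF mx my] unfolding e1 .
      moreover have "mulop (x - y) \<in> I" using Isub[OF mx my] unfolding e2 .
      ultimately show ?thesis unfolding J_def by simp
    qed
    moreover have "sm c x \<in> J" if hx: "x \<in> J" for c x
    proof -
      have mx: "mulop x \<in> I" using hx unfolding J_def by auto
      have ax: "\<forall>c x y. sm c (x * y) = sm c x * y" using alg unfolding K_algebra_def by blast
      have e: "(\<lambda>z. sm c (mulop x z)) = mulop (sm c x)"
        unfolding mulop_def by (rule ext) (rule ax[rule_format])
      have "mulop (sm c x) \<in> I" using Ism[OF mx, of c] unfolding e .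
      then show ?thesis unfolding J_def by simp
    qed
    moreover have "a * x \<in> J" if hx: "x \<in> J" for a x
    proof -
      have mx: "mulop x \<in> I" using hx unfolding J_def by auto
      have ma: "mulop a \<in> R" using AR by auto
      have e: "mulop a \<circ> mulop x = mulop (a * x)" unfolding mulop_def by (rule ext) (simp add: mult.assoc)
      have "mulop (a * x) \<in> I" using Imul[OF ma mx] unfolding e by blast
      then show ?thesis unfolding J_def by simp
    qed
    ultimately show ?thesis unfolding ideal_A_def by blast
  qed
  have J2: "J \<noteq> {0}"
  proof -
    obtain u0 where u0: "u0 \<in> I" "u0 \<noteq> (\<lambda>x. 0)" using nz I0 by blast
    have "u0 \<in> DiffOps sm" using sub IR u0 unfolding subalgebra_D_def by blast
    then obtain i where "u0 \<in> Dsh sm (Suc i)" unfolding DiffOps_def Dord_def by blast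
    define P where "P k = (\<exists>u\<in>I. u \<noteq> (\<lambda>x. 0) \<and> u \<in> Dsh sm k)" for k
    have "P (Suc i)" unfolding P_def using u0 \<open>u0 \<in> Dsh sm (Suc i)\<close> by blast
    define k where "k = (LEAST k. P k)"
    have Pk: "P k" unfolding k_def by (rule LeastI) fact
    have mink: "\<And>j. j < k \<Longrightarrow> \<not> P j" unfolding k_def using not_less_Least by blast
    obtain u where u: "u \<in> I" "u \<noteq> (\<lambda>x. 0)" "u \<in> Dsh sm k" using Pk unfolding P_def by blast
    have "k \<noteq> 0" using u by (auto)
    then obtain j where kj: "k = Suc j" by (cases k) auto
    have uE: "u \<in> End_K sm" and uc: "\<forall>a. comm (mulop a) u \<in> Dsh sm j" using u kj by auto
    have "comm (mulop a) u = (\<lambda>x. 0)" for a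
      using mink[of j] kj commI[OF u(1), of a] uc unfolding P_def by auto
    then have "u \<in> Dsh sm (Suc 0)" using uE by simp
    then have "u = mulop (u 1)" by (rule Dsh1_mulop)
    then have um: "u = mulop (u 1)" .
    have "mulop (u 1) \<in> I" by (subst um[symmetric]) (rule u(1))
    then have "u 1 \<in> J" unfolding J_def by simp
    moreover have "u 1 \<noteq> 0"
    proof
      assume "u 1 = 0"
      have "u = mulop (u 1)" by (rule um)
      also have "\<dots> = mulop 0" using \<open>u 1 = 0\<close> by (simp only:)
      also have "mulop (0::'a) = (\<lambda>x. 0)" unfolding mulop_def by auto
      finally show False using u(2) by simp
    qed
    ultimately have "u 1 \<in> J" "u 1 \<noteq> 0" by auto
    then show ?thesis by blast
  qed
  have J3: "\<forall>u \<in> R \<inter> Dord sm 1. \<forall>x \<in> J. comm u (mulop x) \<in> mulop ` J"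
  proof (intro ballI)
    fix u x assume u: "u \<in> R \<inter> Dord sm 1" and x: "x \<in> J"
    have "u \<in> Dsh sm (Suc (Suc 0))" using u unfolding Dord1 by blast
    then have e: "comm (mulop x) u = mulop (x * u 1 - u x)" by (rule Dsh2_comm)
    have e2: "comm u (mulop x) = mulop (- (x * u 1 - u x))"
    proof (rule ext)
      fix z show "comm u (mulop x) z = mulop (- (x * u 1 - u x)) z"
        using fun_cong[OF e, of z] unfolding comm_def mulop_def by (simp add: algebra_simps)
    qed
    have "mulop x \<in> I" using x unfolding J_def by simp
    have uR: "u \<in> R" using u by simp
    have "u \<circ> mulop x \<in> I" "mulop x \<circ> u \<in> I" using Imul[OF uR \<open>mulop x \<in> I\<close>] by auto
    from Isub[OF this] have "comm u (mulop x) \<in> I" unfolding comm_def by (simp add: o_def)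
    then have "- (x * u 1 - u x) \<in> J" using e2 unfolding J_def by simp
    then show "comm u (mulop x) \<in> mulop ` J" using e2 by blast
  qed
  have J4: "RSR R (mulop ` J) \<inter> range mulop = mulop ` J"
  proof
    show "RSR R (mulop ` J) \<inter> range mulop \<subseteq> mulop ` J"
    proof
      fix w assume w: "w \<in> RSR R (mulop ` J) \<inter> range mulop"
      then obtain y where wy: "w = mulop y" by blast
      from w obtain n :: nat and r s t where H: "\<forall>i<n. r i \<in> R \<and> s i \<in> mulop ` J \<and> t i \<in> R"
        "w = (\<lambda>x. \<Sum>i<n. r i (s i (t i x)))" unfolding RSR_def by blast
      have "\<forall>i<n. (\<lambda>x. r i (s i (t i x))) \<in> I"
      proof (intro allI impI)
        fix i assume "i < n"
        then have "r i \<in> R" "s i \<in> I" "t i \<in> R" using H J_def by auto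
        then have "(r i \<circ> s i) \<circ> t i \<in> I" using Imul[OF \<open>t i \<in> R\<close> conjunct1[OF Imul[OF \<open>r i \<in> R\<close> \<open>s i \<in> I\<close>]]] by blast
        then show "(\<lambda>x. r i (s i (t i x))) \<in> I" by (simp add: o_def)
      qed
      from ideal_sum[OF id this] H(2) have "w \<in> I" by simp
      then show "w \<in> mulop ` J" using wy unfolding J_def by auto
    qed
  next
    show "mulop ` J \<subseteq> RSR R (mulop ` J) \<inter> range mulop"
    proof
      fix w assume "w \<in> mulop ` J"
      moreover have "id \<in> R" using sub unfolding subalgebra_D_def by blast
      ultimately have "w \<in> RSR R (mulop ` J)" unfolding RSR_def
        apply (unfold mem_Collect_eq)
        apply (rule exI[of _ "1::nat"])
        apply (rule exI[of _ "\<lambda>_. id"])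
        apply (rule exI[of _ "\<lambda>_. w"])
        apply (rule exI[of _ "\<lambda>_. id"])
        by simp
      then show "w \<in> RSR R (mulop ` J) \<inter> range mulop" using \<open>w \<in> mulop ` J\<close> by blast
    qed
  qed
  show "let \<aa>0 = {x. mulop x \<in> I} in
               ideal_A sm \<aa>0 \<and> \<aa>0 \<noteq> {0} \<and>
               (\<forall>u \<in> R \<inter> Dord sm 1. \<forall>x \<in> \<aa>0. comm u (mulop x) \<in> mulop ` \<aa>0) \<and>
               RSR R (mulop ` \<aa>0) \<inter> range mulop = mulop ` \<aa>0"
    unfolding Let_def J_def[symmetric] using J1 J2 J3 J4 by blast
next
  fix J :: "'a set" assume "ideal_A sm J"
  show "(\<forall>u \<in> R \<inter> Dord sm 1. \<forall>x \<in> J. comm u (mulop x) \<in> mulop ` J) \<longleftrightarrow>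
             (\<forall>d \<in> (R \<inter> Dord sm 1) \<inter> Der_K sm. \<forall>x \<in> J. comm d (mulop x) \<in> mulop ` J)"
  proof
    assume "\<forall>u \<in> R \<inter> Dord sm 1. \<forall>x \<in> J. comm u (mulop x) \<in> mulop ` J"
    then show "\<forall>d \<in> (R \<inter> Dord sm 1) \<inter> Der_K sm. \<forall>x \<in> J. comm d (mulop x) \<in> mulop ` J" by blast
  next
    assume D: "\<forall>d \<in> (R \<inter> Dord sm 1) \<inter> Der_K sm. \<forall>x \<in> J. comm d (mulop x) \<in> mulop ` J"
    show "\<forall>u \<in> R \<inter> Dord sm 1. \<forall>x \<in> J. comm u (mulop x) \<in> mulop ` J"
    proof (intro ballI)
      fix u x assume u: "u \<in> R \<inter> Dord sm 1" and x: "x \<in> J"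
      have u2: "u \<in> Dsh sm (Suc (Suc 0))" using u unfolding Dord1 by blast
      define d where "d = (\<lambda>z. u z - mulop (u 1) z)"
      have Rsub: "\<forall>u\<in>R. \<forall>v\<in>R. (\<lambda>x. u x - v x) \<in> R" using sub unfolding subalgebra_D_def by blast
      have uR: "u \<in> R" using u by simp
      have mR: "mulop (u 1) \<in> R" using AR by auto
      have dR: "d \<in> R" unfolding d_def by (rule Rsub[rule_format, OF uR mR])
      have uE: "u \<in> End_K sm" using u2 by simp
      have dE: "d \<in> End_K sm" unfolding d_def by (rule End_diff[OF uE mulop_End[OF alg] alg])
      have dder: "d (a * z) = a * d z + z * d a" for a z
        unfolding d_def mulop_def by (rule h1[of u a z, OF Dsh2_form[OF u2, of a z]])
      have dDer: "d \<in> Der_K sm" unfolding Der_K_def mem_Collect_eq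
        using dE dder by blast
      have hz: "a * d z - d (a * z) = - d a * z" for a z by (rule h2[of d a z, OF dder[of a z]])
      have "comm (mulop a) d = mulop (- d a)" for a
        unfolding comm_def mulop_def by (simp only: hz)
      then have "comm (mulop a) d \<in> Dsh sm (Suc 0)" for a using mulop_Dsh1[OF alg] by metis
      then have "d \<in> Dsh sm (Suc (Suc 0))" by (rule Dsh_Suc_I[OF dE])
      then have "d \<in> Dord sm 1" unfolding Dord1 .
      then have dall: "d \<in> (R \<inter> Dord sm 1) \<inter> Der_K sm" using dR dDer by blast
      have "comm d (mulop x) \<in> mulop ` J" using D dall x by blast
      moreover have "comm d (mulop x) = comm u (mulop x)"
      proof (rule ext)
        fix z
        show "comm d (mulop x) z = comm u (mulop x) z"
          unfolding comm_def d_def mulop_def by (rule r3[of "u (x * z)" "u 1" x z "u z"])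
      qed
      ultimately show "comm u (mulop x) \<in> mulop ` J" by simp
    qed
  qed
qed

end
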